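(* Let $\rho$ be $\mathfrak L$-regular, $g>0$, $K\ge2$ and $t=g/(K\log K)$. For every $E\in\mathbb R$ there exist constants $C,c>0$ (depending on $E,K$, and on $g,\rho$) such that for all $x\in\mathbb R$: (1) $\dfrac{c}{1+x^2}\le p_E(x)\le\dfrac{C}{1+x^2}$; (2) $\dfrac{c}{1+|x+E|^2}\le\rho_E(x)\le\dfrac{C}{1+|x+E|^2}$; and moreover (3) $\|\rho_E\|_\infty\le\|\rho\|_\infty$.
   Context: A probability density $p:\mathbb R\to[0,\infty)$ is $\mathfrak L$-regular ($\mathfrak L>0$) if: (i) $p(x)\le\mathfrak L(1+x^2)^{-1}$ for all $x$; (ii) $p(x)\ge\mathfrak L^{-1}$ for all $x\in[-\mathfrak L^{-1},\mathfrak L^{-1}]$; (iii) $p'$ exists everywhere and $|p'(x)|\le\mathfrak L(1+|x|)^{-1-1/\mathfrak L}$ for all $x$; (iv) for every $v>0$, $\inf_{|x|<v}p(x)>0$; (v) $p'(x)=0$ for only finitely many $x$. $V_0$ denotes a random variable with density $\rho$. Self-energy densities: for $E\in\mathbb R$, $p_E$ is the density of a fixed (arbitrarily chosen) real-valued solution $\Gamma$ of the distributional equation $\Gamma\overset{d}{=}\big(V_0-E-t^2\sum_{i=1}^K\Gamma_i\big)^{-1}$, where $\Gamma_1,\dots,\Gamma_K$ are i.i.d. copies of $\Gamma$ independent of $V_0$. $\rho_E$ denotes the density of $V_0-E-t^2\sum_{i=1}^{K-1}\Gamma_i$, where $\Gamma_i$ are i.i.d. with density $p_E$ and independent of $V_0$.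 *)

theory Defs
  imports "HOL-Probability.Probability"
begin

definition prob_density :: "(real \<Rightarrow> real) \<Rightarrow> bool" where
  "prob_density f \<longleftrightarrow> f \<in> borel_measurable lborel \<and> (\<forall>x. 0 \<le> f x)
     \<and> (\<integral>\<^sup>+ x. ennreal (f x) \<partial>lborel) = 1"

definition L_regular :: "real \<Rightarrow> (real \<Rightarrow> real) \<Rightarrow> bool" where
  "L_regular L p \<longleftrightarrow> L > 0
     \<and> (\<forall>x. p x \<le> L / (1 + x\<^sup>2))
     \<and> (\<forall>x. \<bar>x\<bar> \<le> 1 / L \<longrightarrow> p x \<ge> 1 / L)
     \<and> (\<forall>x. p differentiable (at x))
     \<and> (\<forall>x. \<bar>deriv p x\<bar> \<le> L * (1 + \<bar>x\<bar>) powr (-1 - 1 / L))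
     \<and> (\<forall>v>0. (INF x\<in>{x. \<bar>x\<bar> < v}. p x) > 0)
     \<and> finite {x. deriv p x = 0}"

definition shifted_sum_law ::
  "(real \<Rightarrow> real) \<Rightarrow> (real \<Rightarrow> real) \<Rightarrow> real \<Rightarrow> real \<Rightarrow> nat \<Rightarrow> real measure" where
  "shifted_sum_law rho p t E n =
     distr (density lborel rho \<Otimes>\<^sub>M PiM {..<n} (\<lambda>_. density lborel p)) borel
       (\<lambda>(v, \<gamma>). v - E - t\<^sup>2 * (\<Sum>i<n. \<gamma> i))"

definition self_energy_density ::
  "(real \<Rightarrow> real) \<Rightarrow> real \<Rightarrow> nat \<Rightarrow> real \<Rightarrow> (real \<Rightarrow> real) \<Rightarrow> bool" where
  "self_energy_density rho t K E p \<longleftrightarrow> prob_density p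
     \<and> distr (shifted_sum_law rho p t E K) borel inverse = density lborel p"

text \<open>The (canonical, pointwise) density rho_E of V0 - E - t^2 sum_{i<K-1} Gamma_i.\<close>
definition rhoE ::
  "(real \<Rightarrow> real) \<Rightarrow> (real \<Rightarrow> real) \<Rightarrow> real \<Rightarrow> real \<Rightarrow> nat \<Rightarrow> real \<Rightarrow> real" where
  "rhoE rho p t E K x =
     (\<integral> \<gamma>. rho (x + E + t\<^sup>2 * (\<Sum>i<K - 1. \<gamma> i)) \<partial>(PiM {..<K - 1} (\<lambda>_. density lborel p)))"

end

theory Submission
  imports Defs
begin


lemma inv_interval:
  fixes F :: "real \<Rightarrow> ennreal"
  assumes F[measurable]: "F \<in> borel_measurable borel" and ab: "a < b" and nz: "0 < a \<or> b < 0"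
  shows "(\<integral>\<^sup>+y. F y * indicator {1/b..1/a} y \<partial>lborel)
       = (\<integral>\<^sup>+x. F (1/x) * ennreal (1/x\<^sup>2) * indicator {a..b} x \<partial>lborel)"
proof -
  have nz': "x \<in> {a..b} \<Longrightarrow> x \<noteq> 0" for x using ab nz by auto
  have der: "((\<lambda>x. - 1/x) has_real_derivative 1/x\<^sup>2) (at x)" if "x \<in> {a..b}" for x
    using nz'[OF that]
    by (auto intro!: derivative_eq_intros simp: power2_eq_square field_simps)
  have cont: "continuous_on {a..b} (\<lambda>x::real. 1/x\<^sup>2)"
    using nz' by (auto intro!: continuous_intros)
  have "(\<integral>\<^sup>+z. F (- z) * indicator {(\<lambda>x. - 1/x) a..(\<lambda>x. - 1/x) b} z \<partial>lborel)
      = (\<integral>\<^sup>+x. F (- ((\<lambda>x. - 1/x) x)) * ennreal (1/x\<^sup>2) * indicator {a..b} x \<partial>lborel)"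
    by (rule nn_integral_substitution_aux[OF _ _ der cont _ ab]) auto
  also have "\<dots> = (\<integral>\<^sup>+x. F (1/x) * ennreal (1/x\<^sup>2) * indicator {a..b} x \<partial>lborel)"
    by simp
  also have "(\<integral>\<^sup>+z. F (- z) * indicator {(\<lambda>x. - 1/x) a..(\<lambda>x. - 1/x) b} z \<partial>lborel)
      = (\<integral>\<^sup>+y. F y * indicator {1/b..1/a} y \<partial>lborel)"
    by (subst nn_integral_real_affine[of _ "-1" 0]) 
       (auto intro!: nn_integral_cong split: split_indicator)
  finally show ?thesis by simp
qed


lemma inv_lt_self: "(2::real) \<le> y \<Longrightarrow> 1/y < y"
proof -
  assume y: "2 \<le> y"
  have "1/y \<le> 1/2" using y by (intro divide_left_mono) auto
  then show ?thesis using y by linarith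
qed

lemma inv_subst:
  fixes F :: "real \<Rightarrow> ennreal"
  assumes F[measurable]: "F \<in> borel_measurable borel"
  shows "(\<integral>\<^sup>+y. F y \<partial>lborel) = (\<integral>\<^sup>+x. F (1/x) * ennreal (1/x\<^sup>2) \<partial>lborel)"
proof -
  define A where "A n = {- (real n + 2) .. - 1/(real n + 2)} \<union> {1/(real n + 2) .. real n + 2}" for n
  define G where "G x = F (1/x) * ennreal (1/x\<^sup>2)" for x
  have G[measurable]: "G \<in> borel_measurable borel" unfolding G_def by measurable
  have Ameas[measurable]: "A n \<in> sets borel" for n unfolding A_def by auto
  have disj: "indicator (A n) x = (indicator {- (real n + 2) .. - 1/(real n + 2)} x + indicator {1/(real n + 2) .. real n + 2} x :: ennreal)" for n x
    unfolding A_def by (auto split: split_indicator simp: field_simps)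
  have eq: "(\<integral>\<^sup>+y. F y * indicator (A n) y \<partial>lborel) = (\<integral>\<^sup>+x. G x * indicator (A n) x \<partial>lborel)" for n
  proof -
    have p1: "(\<integral>\<^sup>+y. F y * indicator {1/(real n + 2) .. real n + 2} y \<partial>lborel)
       = (\<integral>\<^sup>+x. G x * indicator {1/(real n + 2) .. real n + 2} x \<partial>lborel)"
    proof -
      have "1/(real n + 2) < real n + 2"
        by (rule inv_lt_self) simp
      from inv_interval[OF F this] show ?thesis unfolding G_def
        by (simp add: field_simps)
    qed
    have p2: "(\<integral>\<^sup>+y. F y * indicator {- (real n + 2) .. - 1/(real n + 2)} y \<partial>lborel)
       = (\<integral>\<^sup>+x. G x * indicator {- (real n + 2) .. - 1/(real n + 2)} x \<partial>lborel)"
    proof -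
      have lt: "- (real n + 2) < - 1/(real n + 2)" using inv_lt_self[of "real n + 2"] by simp
      have pos: "real n + 2 > 0" by simp
      have e1: "1 / (- 1/(real n + 2)) = - (real n + 2)" using pos by (simp add: field_simps)
      have e2: "1 / (- (real n + 2)) = - 1/(real n + 2)" using pos by (simp add: field_simps)
      from inv_interval[OF F lt] show ?thesis unfolding G_def e1 e2 by simp
    qed
    have s1: "(\<integral>\<^sup>+y. F y * indicator (A n) y \<partial>lborel) = (\<integral>\<^sup>+y. F y * indicator {- (real n + 2) .. - 1/(real n + 2)} y \<partial>lborel) + (\<integral>\<^sup>+y. F y * indicator {1/(real n + 2) .. real n + 2} y \<partial>lborel)"
      unfolding disj distrib_left by (rule nn_integral_add) auto
    have s2: "(\<integral>\<^sup>+y. G y * indicator (A n) y \<partial>lborel) = (\<integral>\<^sup>+y. G y * indicator {- (real n + 2) .. - 1/(real n + 2)} y \<partial>lborel) + (\<integral>\<^sup>+y. G y * indicator {1/(real n + 2) .. real n + 2} y \<partial>lborel)"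
      unfolding disj distrib_left by (rule nn_integral_add) auto
    show ?thesis unfolding s1 s2 p1 p2 ..
  qed
  have inc: "incseq A"
  proof (rule incseq_SucI)
    fix n
    have h: "1/(3 + real n) \<le> 1/(real n + 2)" by (simp add: field_simps)
    have h2: "1/(3 + real n) > 0" by simp
    show "A n \<subseteq> A (Suc n)" unfolding A_def using h h2 by (auto simp: add.commute)
  qed
  have UA: "(\<Union>n. A n) = - {0}"
  proof
    show "(\<Union>n. A n) \<subseteq> - {0}" unfolding A_def by (auto simp: field_simps)
    show "- {0} \<subseteq> (\<Union>n. A n)"
    proof
      fix x :: real assume "x \<in> - {0}"
      then have x: "x \<noteq> 0" by auto
      obtain n :: nat where n: "max \<bar>x\<bar> (1/\<bar>x\<bar>) < n" using reals_Archimedean2 by blast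
      have "1/(real n + 2) \<le> \<bar>x\<bar>"
      proof -
        have "1/\<bar>x\<bar> \<le> real n + 2" using n by linarith
        then show ?thesis using x by (simp add: field_simps)
      qed
      moreover have "\<bar>x\<bar> \<le> real n + 2" using n by linarith
      ultimately have "x \<in> A n" unfolding A_def by (cases "x < 0") auto
      then show "x \<in> (\<Union>n. A n)" by auto
    qed
  qed
  have rA: "range A \<subseteq> sets (density lborel F)" "range A \<subseteq> sets (density lborel G)" using Ameas by auto
  have l1: "(\<lambda>n. emeasure (density lborel F) (A n)) \<longlonglongrightarrow> emeasure (density lborel F) (- {0})"
    using Lim_emeasure_incseq[of A "density lborel F"] inc UA rA by simp
  have l2: "(\<lambda>n. emeasure (density lborel G) (A n)) \<longlonglongrightarrow> emeasure (density lborel G) (- {0})"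
    using Lim_emeasure_incseq[of A "density lborel G"] inc UA rA by simp
  have "emeasure (density lborel F) (A n) = emeasure (density lborel G) (A n)" for n
    using eq[of n] by (simp add: emeasure_density)
  then have e: "emeasure (density lborel F) (- {0}) = emeasure (density lborel G) (- {0})"
    using l1 l2 LIMSEQ_unique by auto
  have ae: "AE x in lborel. x \<in> - {0}"
    using AE_lborel_singleton[of 0] by auto
  have "(\<integral>\<^sup>+y. F y \<partial>lborel) = (\<integral>\<^sup>+y. F y * indicator (- {0}) y \<partial>lborel)"
    apply (rule nn_integral_cong_AE) using ae by eventually_elim (auto split: split_indicator)
  also have "\<dots> = (\<integral>\<^sup>+y. G y * indicator (- {0}) y \<partial>lborel)"
    using e by (simp add: emeasure_density)
  also have "\<dots> = (\<integral>\<^sup>+y. G y \<partial>lborel)"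
    apply (rule nn_integral_cong_AE) using ae by eventually_elim (auto split: split_indicator)
  finally show ?thesis unfolding G_def .
qed


lemma distr_inverse_density:
  fixes f :: "real \<Rightarrow> ennreal"
  assumes f[measurable]: "f \<in> borel_measurable borel"
  shows "distr (density lborel f) borel inverse = density lborel (\<lambda>x. f (1/x) * ennreal (1/x\<^sup>2))"
proof (rule measure_eqI)
  show "sets (distr (density lborel f) borel inverse) = sets (density lborel (\<lambda>x. f (1/x) * ennreal (1/x\<^sup>2)))"
    by simp
  fix A assume "A \<in> sets (distr (density lborel f) borel inverse)"
  then have A[measurable]: "A \<in> sets borel" by simp
  have im: "(inverse::real\<Rightarrow>real) \<in> borel_measurable borel"
    using borel_measurable_inverse[of "\<lambda>x. x" borel] by simp
  have iA[measurable]: "inverse -` A \<in> sets borel" using measurable_sets[OF im A] by simp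
  have "emeasure (distr (density lborel f) borel inverse) A
      = emeasure (density lborel f) (inverse -` A)"
    by (subst emeasure_distr) auto
  also have "\<dots> = (\<integral>\<^sup>+y. f y * indicator A (inverse y) \<partial>lborel)"
    by (subst emeasure_density) (auto intro!: nn_integral_cong split: split_indicator)
  also have "\<dots> = (\<integral>\<^sup>+x. f (1/x) * indicator A (inverse (1/x)) * ennreal (1/x\<^sup>2) \<partial>lborel)"
    by (rule inv_subst) measurable
  also have "\<dots> = (\<integral>\<^sup>+x. f (1/x) * ennreal (1/x\<^sup>2) * indicator A x \<partial>lborel)"
    by (intro nn_integral_cong) (simp add: inverse_eq_divide mult_ac)
  also have "\<dots> = emeasure (density lborel (\<lambda>x. f (1/x) * ennreal (1/x\<^sup>2))) A"
    by (subst emeasure_density) auto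
  finally show "emeasure (distr (density lborel f) borel inverse) A = emeasure (density lborel (\<lambda>x. f (1/x) * ennreal (1/x\<^sup>2))) A" .
qed


definition GG :: "(real \<Rightarrow> real) \<Rightarrow> real measure \<Rightarrow> real \<Rightarrow> nat \<Rightarrow> real \<Rightarrow> ennreal" where
  "GG rho P t n b = (\<integral>\<^sup>+\<gamma>. ennreal (rho (b + t\<^sup>2 * (\<Sum>i<n. \<gamma> i))) \<partial>PiM {..<n} (\<lambda>_. P))"

locale sd =
  fixes rho :: "real \<Rightarrow> real" and P :: "real measure" and t :: real
  assumes rho_m[measurable]: "rho \<in> borel_measurable borel"
  and rho_nn: "\<And>x. 0 \<le> rho x"
  and rho_int: "(\<integral>\<^sup>+x. ennreal (rho x) \<partial>lborel) = 1"
  and P_prob: "prob_space P"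
  and P_sets[measurable_cong]: "sets P = sets borel"


context sd begin

lemma PiM_prob: "prob_space (PiM I (\<lambda>_::nat. P))"
  by (rule prob_space_PiM) (rule P_prob)

lemma G_meas[measurable]: "GG rho P t n \<in> borel_measurable borel"
proof -
  interpret Q: prob_space "PiM {..<n} (\<lambda>_::nat. P)" by (rule PiM_prob)
  show ?thesis unfolding GG_def
    by (rule Q.borel_measurable_nn_integral) measurable
qed

lemma G0: "GG rho P t 0 b = ennreal (rho b)"
  by (simp add: GG_def PiM_empty nn_integral_count_space_finite)

lemma GSuc: "GG rho P t (Suc n) a = (\<integral>\<^sup>+u. GG rho P t n (a + t\<^sup>2 * u) \<partial>P)"
proof -
  interpret PP: product_sigma_finite "\<lambda>_::nat. P"
    by (rule product_sigma_finite.intro) (use P_prob prob_space_imp_sigma_finite in auto)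
  have "GG rho P t (Suc n) a = (\<integral>\<^sup>+\<gamma>. ennreal (rho (a + t\<^sup>2 * (\<Sum>i\<in>insert n {..<n}. \<gamma> i))) \<partial>PiM (insert n {..<n}) (\<lambda>_. P))"
    unfolding GG_def lessThan_Suc ..
  also have "\<dots> = (\<integral>\<^sup>+y. (\<integral>\<^sup>+x. ennreal (rho (a + t\<^sup>2 * (\<Sum>i\<in>insert n {..<n}. (x(n := y)) i))) \<partial>PiM {..<n} (\<lambda>_. P)) \<partial>P)"
    by (rule PP.product_nn_integral_insert_rev) auto
  also have "\<dots> = (\<integral>\<^sup>+u. GG rho P t n (a + t\<^sup>2 * u) \<partial>P)"
  proof (intro nn_integral_cong)
    fix y
    have "(\<Sum>i\<in>insert n {..<n}. (x(n := y)) i) = y + (\<Sum>i<n. x i)" for x :: "nat \<Rightarrow> real"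
      by (simp add: sum.insert)
    then show "(\<integral>\<^sup>+x. ennreal (rho (a + t\<^sup>2 * (\<Sum>i\<in>insert n {..<n}. (x(n := y)) i))) \<partial>PiM {..<n} (\<lambda>_. P))
        = GG rho P t n (a + t\<^sup>2 * y)"
      unfolding GG_def by (simp add: algebra_simps)
  qed
  finally show ?thesis .
qed

lemma G_int: "(\<integral>\<^sup>+b. GG rho P t n b \<partial>lborel) = 1"
proof (induction n)
  case 0
  then show ?case by (simp add: G0 rho_int)
next
  case (Suc n)
  interpret Pp: prob_space P by (rule P_prob)
  interpret pair_sigma_finite lborel P by unfold_locales
  have "(\<integral>\<^sup>+b. GG rho P t (Suc n) b \<partial>lborel) = (\<integral>\<^sup>+a. \<integral>\<^sup>+u. GG rho P t n (a + t\<^sup>2 * u) \<partial>P \<partial>lborel)"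
    by (simp add: GSuc)
  also have "\<dots> = (\<integral>\<^sup>+u. \<integral>\<^sup>+a. GG rho P t n (a + t\<^sup>2 * u) \<partial>lborel \<partial>P)"
    by (rule Fubini'[symmetric]) measurable
  also have "\<dots> = (\<integral>\<^sup>+u. 1 \<partial>P)"
  proof (intro nn_integral_cong)
    fix u
    show "(\<integral>\<^sup>+a. GG rho P t n (a + t\<^sup>2 * u) \<partial>lborel) = 1"
      using nn_integral_real_affine[OF G_meas[of n], where c=1 and t="t\<^sup>2 * u"] Suc.IH by (simp add: add.commute)
  qed
  also have "\<dots> = 1" using Pp.emeasure_space_1 by simp
  finally show ?case .
qed

lemma G_le: assumes "\<And>x. rho x \<le> B" shows "GG rho P t n b \<le> ennreal B"
proof -
  interpret Q: prob_space "PiM {..<n} (\<lambda>_::nat. P)" by (rule PiM_prob)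
  have "GG rho P t n b \<le> (\<integral>\<^sup>+\<gamma>. ennreal B \<partial>PiM {..<n} (\<lambda>_. P))"
    unfolding GG_def by (intro nn_integral_mono ennreal_leI assms)
  also have "\<dots> = ennreal B" by (simp add: Q.emeasure_space_1)
  finally show ?thesis .
qed

end


lemma ennreal_inv_bound:
  fixes J :: ennreal and c :: real
  assumes c: "c > 0" and J: "ennreal c * J \<le> 1"
  shows "J \<le> ennreal (1/c)"
proof -
  have "ennreal (1/c) * ennreal c = 1"
    using c by (simp add: ennreal_mult[symmetric])
  then have "J = ennreal (1/c) * (ennreal c * J)" by (simp add: mult.assoc[symmetric])
  also have "\<dots> \<le> ennreal (1/c) * 1" by (intro mult_left_mono J) auto
  finally show ?thesis by simp
qed

lemma upper_step:
  fixes H q :: "real \<Rightarrow> ennreal"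
  assumes H[measurable]: "H \<in> borel_measurable borel" and Hint: "(\<integral>\<^sup>+b. H b \<partial>lborel) \<le> 1"
    and HC: "\<And>b. H b \<le> ennreal (Cz/(1+b\<^sup>2))" and HB: "\<And>b. H b \<le> ennreal Bz"
    and q[measurable]: "q \<in> borel_measurable borel" and qint: "(\<integral>\<^sup>+u. q u \<partial>lborel) = 1"
    and qD: "\<And>u. 1 \<le> \<bar>u\<bar> \<Longrightarrow> q u \<le> ennreal (D/u\<^sup>2)"
    and t: "t > 0" and Cz: "Cz \<ge> 0" and Bz: "Bz \<ge> 0" and D: "D \<ge> 0"
  shows "\<exists>C1>0. \<forall>a. (\<integral>\<^sup>+u. H (a + t\<^sup>2*u) \<partial>density lborel q) \<le> ennreal (C1/(1+a\<^sup>2))"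
proof -
  define A0 where "A0 = max 1 (2*t\<^sup>2)"
  define C1 where "C1 = 4*Cz + 8*D*t\<^sup>2 + Bz*(1+A0\<^sup>2) + 1"
  have nn1: "0 \<le> 4*Cz" "0 \<le> 8*D*t\<^sup>2" "0 \<le> Bz*(1+A0\<^sup>2)" using Cz Bz D by auto
  have C1pos: "C1 > 0" unfolding C1_def using nn1 by linarith
  have t2: "t\<^sup>2 > 0" using t by simp
  have aff: "(\<integral>\<^sup>+u. H (a + t\<^sup>2*u) \<partial>lborel) \<le> ennreal (1/t\<^sup>2)" for a
  proof -
    have "(\<integral>\<^sup>+b. H b \<partial>lborel) = ennreal \<bar>t\<^sup>2\<bar> * (\<integral>\<^sup>+u. H (a + t\<^sup>2*u) \<partial>lborel)"
      by (rule nn_integral_real_affine) (use t2 in auto)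
    then have "ennreal (t\<^sup>2) * (\<integral>\<^sup>+u. H (a + t\<^sup>2*u) \<partial>lborel) \<le> 1" using Hint by simp
    then show ?thesis by (rule ennreal_inv_bound[OF t2])
  qed
  show ?thesis
  proof (intro exI[of _ C1] conjI allI C1pos)
    fix a
    have eqd: "(\<integral>\<^sup>+u. H (a + t\<^sup>2*u) \<partial>density lborel q) = (\<integral>\<^sup>+u. q u * H (a + t\<^sup>2*u) \<partial>lborel)"
      by (subst nn_integral_density) auto
    have a2pos: "1 + a\<^sup>2 > 0" by (simp add: add_pos_nonneg)
    show "(\<integral>\<^sup>+u. H (a + t\<^sup>2*u) \<partial>density lborel q) \<le> ennreal (C1/(1+a\<^sup>2))"
    proof (cases "\<bar>a\<bar> < A0")
      case True
      have "(\<integral>\<^sup>+u. q u * H (a + t\<^sup>2*u) \<partial>lborel) \<le> (\<integral>\<^sup>+u. q u * ennreal Bz \<partial>lborel)"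
        by (intro nn_integral_mono mult_left_mono HB) auto
      also have "\<dots> = ennreal Bz" using qint by (simp add: nn_integral_multc)
      also have "\<dots> \<le> ennreal (C1/(1+a\<^sup>2))"
      proof (rule ennreal_leI)
        have "\<bar>a\<bar>\<^sup>2 \<le> A0\<^sup>2" using True by (intro power_mono) auto
        then have "a\<^sup>2 \<le> A0\<^sup>2" by simp
        then have "Bz * (1+a\<^sup>2) \<le> Bz*(1+A0\<^sup>2)" using Bz by (intro mult_left_mono) auto
        also have "\<dots> \<le> C1" unfolding C1_def using nn1 by linarith
        finally show "Bz \<le> C1/(1+a\<^sup>2)" using a2pos by (simp add: le_divide_eq)
      qed
      finally show ?thesis using eqd by simp
    next
      case False
      then have a1: "1 \<le> \<bar>a\<bar>" and a2: "2*t\<^sup>2 \<le> \<bar>a\<bar>" unfolding A0_def by auto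
      define R where "R = \<bar>a\<bar>/(2*t\<^sup>2)"
      have R1: "1 \<le> R" using a2 t2 unfolding R_def by (simp add: field_simps)
      have pw: "q u * H (a + t\<^sup>2*u) \<le> ennreal (4*Cz/(1+a\<^sup>2)) * q u + ennreal (D/R\<^sup>2) * H (a + t\<^sup>2*u)" for u
      proof (cases "\<bar>t\<^sup>2*u\<bar> \<le> \<bar>a\<bar>/2")
        case True
        have "\<bar>a\<bar>/2 \<le> \<bar>a + t\<^sup>2*u\<bar>" using True by linarith
        then have "(\<bar>a\<bar>/2)\<^sup>2 \<le> \<bar>a + t\<^sup>2*u\<bar>\<^sup>2" by (intro power_mono) auto
        then have sq: "a\<^sup>2/4 \<le> (a + t\<^sup>2*u)\<^sup>2" by (simp add: power_divide)
        have "Cz/(1+(a + t\<^sup>2*u)\<^sup>2) \<le> Cz/((1+a\<^sup>2)/4)"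
          using Cz sq a2pos by (intro divide_left_mono) (auto simp: add_pos_nonneg)
        also have "\<dots> = 4*Cz/(1+a\<^sup>2)" by simp
        finally have "H (a + t\<^sup>2*u) \<le> ennreal (4*Cz/(1+a\<^sup>2))"
          using HC[of "a + t\<^sup>2*u"] by (meson ennreal_leI order.trans)
        then have "q u * H (a + t\<^sup>2*u) \<le> ennreal (4*Cz/(1+a\<^sup>2)) * q u"
          by (simp add: mult.commute mult_left_mono)
        then show ?thesis by (rule add_increasing2[rotated]) simp
      next
        case False
        then have "\<bar>a\<bar>/2 < t\<^sup>2 * \<bar>u\<bar>" by (simp add: abs_mult)
        then have uR: "R < \<bar>u\<bar>" unfolding R_def using t2 by (simp add: field_simps)
        then have "R\<^sup>2 \<le> \<bar>u\<bar>\<^sup>2" using R1 by (intro power_mono) auto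
        moreover have "R\<^sup>2 > 0" using R1 by simp
        have "u \<noteq> 0" using uR R1 by auto
        then have "u\<^sup>2 > 0" by simp
        then have "D/u\<^sup>2 \<le> D/R\<^sup>2" using D \<open>R\<^sup>2 > 0\<close> \<open>R\<^sup>2 \<le> \<bar>u\<bar>\<^sup>2\<close>
          by (intro divide_left_mono) auto
        then have "q u \<le> ennreal (D/R\<^sup>2)" using qD[of u] uR R1
          by (meson ennreal_leI order.trans less_imp_le)
        then have "q u * H (a + t\<^sup>2*u) \<le> ennreal (D/R\<^sup>2) * H (a + t\<^sup>2*u)"
          by (simp add: mult_right_mono)
        then show ?thesis by (rule add_increasing[OF zero_le])
      qed
      have "(\<integral>\<^sup>+u. q u * H (a + t\<^sup>2*u) \<partial>lborel) \<le> (\<integral>\<^sup>+u. ennreal (4*Cz/(1+a\<^sup>2)) * q u + ennreal (D/R\<^sup>2) * H (a + t\<^sup>2*u) \<partial>lborel)"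
        by (intro nn_integral_mono pw)
      also have "\<dots> = ennreal (4*Cz/(1+a\<^sup>2)) * (\<integral>\<^sup>+u. q u \<partial>lborel) + ennreal (D/R\<^sup>2) * (\<integral>\<^sup>+u. H (a + t\<^sup>2*u) \<partial>lborel)"
        by (subst nn_integral_add) (auto simp: nn_integral_cmult)
      also have "\<dots> \<le> ennreal (4*Cz/(1+a\<^sup>2)) + ennreal (D/R\<^sup>2) * ennreal (1/t\<^sup>2)"
        using qint aff[of a] by (auto intro: add_mono mult_left_mono)
      also have "\<dots> = ennreal (4*Cz/(1+a\<^sup>2) + D/R\<^sup>2 * (1/t\<^sup>2))"
      proof -
        have m: "ennreal (D/R\<^sup>2) * ennreal (1/t\<^sup>2) = ennreal (D/R\<^sup>2 * (1/t\<^sup>2))"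
          by (rule ennreal_mult[symmetric]) (use D in auto)
        show ?thesis unfolding m
          by (rule ennreal_plus[symmetric]) (use Cz D a2pos in auto)
      qed
      also have "\<dots> \<le> ennreal (C1/(1+a\<^sup>2))"
      proof (rule ennreal_leI)
        have anz: "a \<noteq> 0" using a1 by auto
        have e1: "D/R\<^sup>2 * (1/t\<^sup>2) = 4*D*t\<^sup>2/a\<^sup>2" unfolding R_def using t2 anz
          by (simp add: field_simps power2_eq_square)
        have "1 \<le> a\<^sup>2" using a1 by (metis abs_ge_self abs_le_square_iff abs_one one_power2 order.trans abs_of_nonneg zero_le_one)
        then have "1 + a\<^sup>2 \<le> 2*a\<^sup>2" by simp
        then have "8*D*t\<^sup>2/(2*a\<^sup>2) \<le> 8*D*t\<^sup>2/(1+a\<^sup>2)"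
          using nn1 a2pos \<open>1 \<le> a\<^sup>2\<close> by (intro divide_left_mono) (auto intro!: mult_pos_pos)
        then have e2: "4*D*t\<^sup>2/a\<^sup>2 \<le> 8*D*t\<^sup>2/(1+a\<^sup>2)" by simp
        have "4*Cz/(1+a\<^sup>2) + 8*D*t\<^sup>2/(1+a\<^sup>2) = (4*Cz + 8*D*t\<^sup>2)/(1+a\<^sup>2)"
          by (simp add: add_divide_distrib)
        also have "\<dots> \<le> C1/(1+a\<^sup>2)" unfolding C1_def using nn1 a2pos
          by (intro divide_right_mono) auto
        finally show "4*Cz/(1+a\<^sup>2) + D/R\<^sup>2 * (1/t\<^sup>2) \<le> C1/(1+a\<^sup>2)" using e1 e2 by linarith
      qed
      finally show ?thesis using eqd by simp
    qed
  qed
qed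


lemma exists_mass:
  assumes P: "prob_space P" and Ps: "sets P = sets borel"
  shows "\<exists>M::real. 0 < emeasure P {-M..M}"
proof (rule ccontr)
  assume "\<not> ?thesis"
  then have z0: "\<not> 0 < emeasure P {- M..M}" for M by blast
  have z: "emeasure P {- real n..real n} = 0" for n :: nat
    using z0[of "real n"] by (simp only: not_gr_zero)
  have rs: "range (\<lambda>n::nat. {- real n..real n}) \<subseteq> sets P"
    by (simp add: Ps image_subset_iff)
  have "emeasure P (\<Union>n. {- real n..real n}) = 0"
    by (rule emeasure_UN_eq_0[OF z rs])
  moreover have "(\<Union>n. {- real n..real n}) = UNIV"
  proof -
    have "x \<in> (\<Union>n. {- real n..real n})" for x :: real
    proof -
      obtain n :: nat where "\<bar>x\<bar> \<le> real n" using real_arch_simple by blast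
      then have "x \<in> {- real n..real n}" by auto
      then show ?thesis by blast
    qed
    then show ?thesis by blast
  qed
  moreover have "space P = UNIV" using sets_eq_imp_space_eq[OF Ps] by simp
  ultimately have "emeasure P (space P) = 0" by simp
  then show False using prob_space.emeasure_space_1[OF P] by simp
qed

lemma pos_step:
  fixes H :: "real \<Rightarrow> ennreal"
  assumes H[measurable]: "H \<in> borel_measurable borel"
    and Hpos: "\<And>R. \<exists>m>0. \<forall>b. \<bar>b\<bar> \<le> R \<longrightarrow> ennreal m \<le> H b"
    and P: "prob_space P" and Ps: "sets P = sets borel"
  shows "\<exists>m>0. \<forall>a. \<bar>a\<bar> \<le> R \<longrightarrow> ennreal m \<le> (\<integral>\<^sup>+u. H (a + t\<^sup>2*u) \<partial>P)"
proof -
  obtain M where M: "0 < emeasure P {-M..M}" using exists_mass[OF P Ps] by blast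
  obtain m where m: "m > 0" "\<forall>b. \<bar>b\<bar> \<le> R + t\<^sup>2*\<bar>M\<bar> \<longrightarrow> ennreal m \<le> H b"
    using Hpos by blast
  define e where "e = emeasure P {-M..M}"
  have efin: "e \<noteq> \<top>" unfolding e_def using prob_space.emeasure_le_1[OF P, of "{-M..M}"]
    by (auto simp: top_unique)
  have epos: "0 < enn2real e" using M efin unfolding e_def by (simp add: enn2real_positive_iff less_top)
  show ?thesis
  proof (intro exI[of _ "m * enn2real e"] conjI allI impI)
    show "0 < m * enn2real e" using m epos by simp
    fix a assume a: "\<bar>a\<bar> \<le> R"
    have "ennreal (m * enn2real e) = ennreal m * e"
      using m efin by (simp add: ennreal_mult less_top)
    also have "\<dots> = (\<integral>\<^sup>+u. ennreal m * indicator {-M..M} u \<partial>P)"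
      unfolding e_def by (subst nn_integral_cmult_indicator) (use Ps in auto)
    also have "\<dots> \<le> (\<integral>\<^sup>+u. H (a + t\<^sup>2*u) \<partial>P)"
    proof (intro nn_integral_mono)
      fix u
      show "ennreal m * indicator {-M..M} u \<le> H (a + t\<^sup>2*u)"
      proof (cases "u \<in> {-M..M}")
        case True
        then have "\<bar>u\<bar> \<le> \<bar>M\<bar>" by auto
        then have "t\<^sup>2 * \<bar>u\<bar> \<le> t\<^sup>2 * \<bar>M\<bar>" by (intro mult_left_mono) auto
        moreover have "\<bar>a + t\<^sup>2*u\<bar> \<le> \<bar>a\<bar> + t\<^sup>2 * \<bar>u\<bar>"
          using abs_triangle_ineq[of a "t\<^sup>2*u"] by (simp add: abs_mult)
        ultimately have "\<bar>a + t\<^sup>2*u\<bar> \<le> R + t\<^sup>2*\<bar>M\<bar>" using a by linarith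
        then show ?thesis using m True by simp
      qed simp
    qed
    finally show "ennreal (m * enn2real e) \<le> (\<integral>\<^sup>+u. H (a + t\<^sup>2*u) \<partial>P)" .
  qed
qed

lemma tail_step:
  fixes H q :: "real \<Rightarrow> ennreal"
  assumes H[measurable]: "H \<in> borel_measurable borel"
    and Hm: "\<And>b. \<bar>b\<bar> \<le> 1 \<Longrightarrow> ennreal m \<le> H b" and m: "m > 0"
    and q[measurable]: "q \<in> borel_measurable borel"
    and qc: "\<And>u. 1 \<le> \<bar>u\<bar> \<Longrightarrow> ennreal (cz/u\<^sup>2) \<le> q u" and cz: "cz > 0" and t: "t > 0"
    and a: "1 + t\<^sup>2 \<le> \<bar>a\<bar>"
  shows "ennreal (m*cz*t\<^sup>2/(1+a\<^sup>2)) \<le> (\<integral>\<^sup>+u. H (a + t\<^sup>2*u) \<partial>density lborel q)"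
proof -
  have t2: "t\<^sup>2 > 0" using t by simp
  define I where "I = {(-1-a)/t\<^sup>2 .. (1-a)/t\<^sup>2}"
  define k where "k = m * (cz * t\<^sup>2 * t\<^sup>2 / (\<bar>a\<bar>+1)\<^sup>2)"
  have kpos: "k \<ge> 0" unfolding k_def using m cz by simp
  have pw: "ennreal k * indicator I u \<le> q u * H (a + t\<^sup>2*u)" for u
  proof (cases "u \<in> I")
    case True
    then have u1: "-1-a \<le> t\<^sup>2*u" "t\<^sup>2*u \<le> 1-a" unfolding I_def using t2 by (auto simp: field_simps)
    then have hb: "\<bar>a + t\<^sup>2*u\<bar> \<le> 1" by auto
    have tu1: "t\<^sup>2 \<le> \<bar>t\<^sup>2*u\<bar>" using u1 a by auto
    have tu2: "\<bar>t\<^sup>2*u\<bar> \<le> \<bar>a\<bar> + 1" using u1 by auto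
    have uabs: "\<bar>t\<^sup>2*u\<bar> = t\<^sup>2 * \<bar>u\<bar>" by (simp add: abs_mult)
    have u1': "1 \<le> \<bar>u\<bar>" using tu1 t2 uabs by (simp add: mult_le_cancel_left1)
    have "(t\<^sup>2 * \<bar>u\<bar>)\<^sup>2 \<le> (\<bar>a\<bar> + 1)\<^sup>2" using tu2 uabs by (intro power_mono) auto
    moreover have "(t\<^sup>2 * \<bar>u\<bar>)\<^sup>2 = t\<^sup>2 * t\<^sup>2 * u\<^sup>2"
      by (simp add: power_mult_distrib power2_eq_square mult_ac)
    ultimately have usq: "t\<^sup>2 * t\<^sup>2 * u\<^sup>2 \<le> (\<bar>a\<bar> + 1)\<^sup>2" by simp
    have "u \<noteq> 0" using u1' by auto
    then have upos: "u\<^sup>2 > 0" by simp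
    have apos: "(\<bar>a\<bar> + 1)\<^sup>2 > 0" by (intro zero_less_power) (simp add: add_nonneg_pos)
    have "cz * t\<^sup>2 * t\<^sup>2 / (\<bar>a\<bar>+1)\<^sup>2 \<le> cz * t\<^sup>2 * t\<^sup>2 / (t\<^sup>2 * t\<^sup>2 * u\<^sup>2)"
      using usq upos apos cz t2 by (intro divide_left_mono) auto
    also have "\<dots> = (t\<^sup>2 * t\<^sup>2) * cz / ((t\<^sup>2 * t\<^sup>2) * u\<^sup>2)" by (simp only: mult_ac)
    also have "\<dots> = cz/u\<^sup>2" by (rule nonzero_mult_divide_mult_cancel_left) (use t2 in simp)
    finally have "cz * t\<^sup>2 * t\<^sup>2 / (\<bar>a\<bar>+1)\<^sup>2 \<le> cz/u\<^sup>2" .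
    then have "ennreal (cz * t\<^sup>2 * t\<^sup>2 / (\<bar>a\<bar>+1)\<^sup>2) \<le> q u"
      using qc[OF u1'] by (meson ennreal_leI order.trans)
    moreover have "ennreal m \<le> H (a + t\<^sup>2*u)" using Hm hb by simp
    ultimately have "ennreal (cz * t\<^sup>2 * t\<^sup>2 / (\<bar>a\<bar>+1)\<^sup>2) * ennreal m \<le> q u * H (a + t\<^sup>2*u)"
      by (intro mult_mono) auto
    moreover have kx: "ennreal k = ennreal (cz * t\<^sup>2 * t\<^sup>2 / (\<bar>a\<bar>+1)\<^sup>2) * ennreal m"
      unfolding k_def by (subst ennreal_mult[symmetric]) (use m cz in \<open>auto simp: mult.commute\<close>)
    ultimately show ?thesis using True by simp
  qed simp
  have "(\<integral>\<^sup>+u. ennreal k * indicator I u \<partial>lborel) = ennreal k * ennreal (2/t\<^sup>2)"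
  proof -
    have "(-1-a)/t\<^sup>2 \<le> (1-a)/t\<^sup>2" using t2 by (simp add: divide_right_mono)
    moreover have "(1-a)/t\<^sup>2 - (-1-a)/t\<^sup>2 = 2/t\<^sup>2" by (simp add: diff_divide_distrib[symmetric])
    ultimately show ?thesis unfolding I_def by (subst nn_integral_cmult_indicator) auto
  qed
  also have "\<dots> = ennreal (k * (2/t\<^sup>2))" by (rule ennreal_mult[symmetric]) (use kpos t2 in auto)
  finally have eqI: "(\<integral>\<^sup>+u. ennreal k * indicator I u \<partial>lborel) = ennreal (k * (2/t\<^sup>2))" .
  have "m*cz*t\<^sup>2/(1+a\<^sup>2) \<le> k * (2/t\<^sup>2)"
  proof -
    have apos: "(\<bar>a\<bar> + 1)\<^sup>2 > 0" by (intro zero_less_power) (simp add: add_nonneg_pos)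
    have "(\<bar>a\<bar> + 1)\<^sup>2 = 2 * (1 + a\<^sup>2) - (\<bar>a\<bar> - 1)\<^sup>2"
      by (simp add: power2_eq_square algebra_simps)
    moreover have "(\<bar>a\<bar> - 1)\<^sup>2 \<ge> 0" by simp
    ultimately have sq: "(\<bar>a\<bar> + 1)\<^sup>2 \<le> 2 * (1 + a\<^sup>2)" by linarith
    have "k * (2/t\<^sup>2) = 2 * (m*cz*t\<^sup>2) / (\<bar>a\<bar>+1)\<^sup>2" unfolding k_def using t2
      by (simp add: field_simps power2_eq_square)
    also have "\<dots> = (m*cz*t\<^sup>2) / ((\<bar>a\<bar>+1)\<^sup>2 / 2)" by simp
    also have "\<dots> \<ge> (m*cz*t\<^sup>2) / (1+a\<^sup>2)"
      using sq apos m cz t2 by (intro divide_left_mono) (auto intro!: mult_pos_pos add_pos_nonneg)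
    finally show ?thesis .
  qed
  then have "ennreal (m*cz*t\<^sup>2/(1+a\<^sup>2)) \<le> (\<integral>\<^sup>+u. ennreal k * indicator I u \<partial>lborel)"
    unfolding eqI by (rule ennreal_leI)
  also have "\<dots> \<le> (\<integral>\<^sup>+u. q u * H (a + t\<^sup>2*u) \<partial>lborel)" by (intro nn_integral_mono pw)
  also have "\<dots> = (\<integral>\<^sup>+u. H (a + t\<^sup>2*u) \<partial>density lborel q)"
    by (subst nn_integral_density) auto
  finally show ?thesis .
qed


context sd begin

lemma shifted:
  "distr (density lborel (\<lambda>x. ennreal (rho x)) \<Otimes>\<^sub>M PiM {..<n} (\<lambda>_. P)) borel
       (\<lambda>(v, \<gamma>). v - E - t\<^sup>2 * sum \<gamma> {..<n})
   = density lborel (\<lambda>y. GG rho P t n (y + E))"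
  (is "distr ?M borel ?f = _")
proof (rule measure_eqI)
  show "sets (distr ?M borel ?f) = sets (density lborel (\<lambda>y. GG rho P t n (y + E)))" by simp
  fix A assume "A \<in> sets (distr ?M borel ?f)"
  then have A[measurable]: "A \<in> sets borel" by simp
  interpret Q: prob_space "PiM {..<n} (\<lambda>_::nat. P)" by (rule PiM_prob)
  interpret N: prob_space "density lborel (\<lambda>x. ennreal (rho x))"
    by (rule prob_spaceI) (simp add: emeasure_density rho_int)
  interpret NQ: pair_sigma_finite "density lborel (\<lambda>x. ennreal (rho x))" "PiM {..<n} (\<lambda>_::nat. P)"
    by unfold_locales
  interpret LQ: pair_sigma_finite lborel "PiM {..<n} (\<lambda>_::nat. P)"
    by unfold_locales
  have fm[measurable]: "?f \<in> borel_measurable ?M" by measurable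
  have "emeasure (distr ?M borel ?f) A = (\<integral>\<^sup>+x. indicator A x \<partial>distr ?M borel ?f)"
    by (simp add: nn_integral_indicator)
  also have "\<dots> = (\<integral>\<^sup>+z. indicator A (?f z) \<partial>?M)"
    by (subst nn_integral_distr) auto
  also have "\<dots> = (\<integral>\<^sup>+\<gamma>. \<integral>\<^sup>+v. indicator A (?f (v, \<gamma>)) \<partial>density lborel (\<lambda>x. ennreal (rho x)) \<partial>PiM {..<n} (\<lambda>_. P))"
    by (rule NQ.nn_integral_snd[symmetric]) measurable
  also have "\<dots> = (\<integral>\<^sup>+\<gamma>. \<integral>\<^sup>+y. ennreal (rho (y + E + t\<^sup>2 * sum \<gamma> {..<n})) * indicator A y \<partial>lborel \<partial>PiM {..<n} (\<lambda>_. P))"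
  proof (intro nn_integral_cong)
    fix \<gamma> :: "nat \<Rightarrow> real"
    let ?S = "t\<^sup>2 * sum \<gamma> {..<n}"
    have "(\<integral>\<^sup>+v. indicator A (?f (v, \<gamma>)) \<partial>density lborel (\<lambda>x. ennreal (rho x)))
        = (\<integral>\<^sup>+v. ennreal (rho v) * indicator A (v - E - ?S) \<partial>lborel)"
      by (subst nn_integral_density) auto
    also have "\<dots> = (\<integral>\<^sup>+y. ennreal (rho (E + ?S + 1 * y)) * indicator A ((E + ?S + 1 * y) - E - ?S) \<partial>lborel)"
      using nn_integral_real_affine[where f="\<lambda>v. ennreal (rho v) * indicator A (v - E - ?S)" and c=1 and t="E + ?S"]
      by simp
    also have "\<dots> = (\<integral>\<^sup>+y. ennreal (rho (y + E + ?S)) * indicator A y \<partial>lborel)"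
      by (simp add: add_ac)
    finally show "(\<integral>\<^sup>+v. indicator A (?f (v, \<gamma>)) \<partial>density lborel (\<lambda>x. ennreal (rho x)))
        = (\<integral>\<^sup>+y. ennreal (rho (y + E + ?S)) * indicator A y \<partial>lborel)" .
  qed
  also have "\<dots> = (\<integral>\<^sup>+y. \<integral>\<^sup>+\<gamma>. ennreal (rho (y + E + t\<^sup>2 * sum \<gamma> {..<n})) * indicator A y \<partial>PiM {..<n} (\<lambda>_. P) \<partial>lborel)"
    by (rule LQ.Fubini') measurable
  also have "\<dots> = (\<integral>\<^sup>+y. GG rho P t n (y + E) * indicator A y \<partial>lborel)"
    unfolding GG_def by (intro nn_integral_cong) (subst nn_integral_multc, auto)
  also have "\<dots> = emeasure (density lborel (\<lambda>y. GG rho P t n (y + E))) A"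
    by (subst emeasure_density) auto
  finally show "emeasure (distr ?M borel ?f) A = emeasure (density lborel (\<lambda>y. GG rho P t n (y + E))) A" .
qed

lemma G_integral:
  assumes B: "\<And>x. rho x \<le> B"
  shows "GG rho P t n b = ennreal (\<integral>\<gamma>. rho (b + t\<^sup>2 * sum \<gamma> {..<n}) \<partial>PiM {..<n} (\<lambda>_. P))"
    and "0 \<le> (\<integral>\<gamma>. rho (b + t\<^sup>2 * sum \<gamma> {..<n}) \<partial>PiM {..<n} (\<lambda>_. P))"
proof -
  interpret Q: prob_space "PiM {..<n} (\<lambda>_::nat. P)" by (rule PiM_prob)
  have int: "integrable (PiM {..<n} (\<lambda>_. P)) (\<lambda>\<gamma>. rho (b + t\<^sup>2 * sum \<gamma> {..<n}))"
    by (rule Q.integrable_const_bound[where B=B]) (auto simp: rho_nn B)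
  show "GG rho P t n b = ennreal (\<integral>\<gamma>. rho (b + t\<^sup>2 * sum \<gamma> {..<n}) \<partial>PiM {..<n} (\<lambda>_. P))"
    unfolding GG_def by (rule nn_integral_eq_integral[OF int]) (simp add: rho_nn)
  show "0 \<le> (\<integral>\<gamma>. rho (b + t\<^sup>2 * sum \<gamma> {..<n}) \<partial>PiM {..<n} (\<lambda>_. P))"
    by (intro integral_nonneg_AE AE_I2) (simp add: rho_nn)
qed

end


locale sd2 = sd +
  fixes Q :: "real \<Rightarrow> ennreal" and B L :: real
  assumes Q_m[measurable]: "Q \<in> borel_measurable borel"
  and P_eq: "P = density lborel Q"
  and rho_B: "\<And>x. rho x \<le> B"
  and rho_L: "\<And>x. rho x \<le> L/(1+x\<^sup>2)"
  and L_pos: "L > 0"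
  and QB: "\<And>u. 1 \<le> \<bar>u\<bar> \<Longrightarrow> Q u \<le> ennreal (B/u\<^sup>2)"
  and t_pos: "t > 0"
  and rho_pos: "\<And>R. \<exists>m>0. \<forall>b. \<bar>b\<bar> \<le> R \<longrightarrow> m \<le> rho b"
begin

lemma B_nn: "B \<ge> 0" using rho_B[of 0] rho_nn[of 0] by linarith

lemma Q_int: "(\<integral>\<^sup>+u. Q u \<partial>lborel) = 1"
proof -
  have "emeasure P (space P) = 1" using prob_space.emeasure_space_1[OF P_prob] .
  then show ?thesis unfolding P_eq by (simp add: emeasure_density)
qed

lemma GSuc': "GG rho P t (Suc n) a = (\<integral>\<^sup>+u. GG rho P t n (a + t\<^sup>2 * u) \<partial>density lborel Q)"
  using GSuc[of n a] unfolding P_eq[symmetric] .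

lemma upper: "\<exists>C>0. \<forall>b. GG rho P t n b \<le> ennreal (C/(1+b\<^sup>2))"
proof (induction n)
  case 0
  show ?case using L_pos rho_L by (auto simp: G0 intro!: exI[of _ L] ennreal_leI)
next
  case (Suc n)
  then obtain C0 where C0: "C0 > 0" "\<And>b. GG rho P t n b \<le> ennreal (C0/(1+b\<^sup>2))" by blast
  have "\<exists>C1>0. \<forall>a. (\<integral>\<^sup>+u. GG rho P t n (a + t\<^sup>2*u) \<partial>density lborel Q) \<le> ennreal (C1/(1+a\<^sup>2))"
    by (rule upper_step[where Cz=C0 and Bz=B and D=B])
       (use C0 G_int[of n] G_le[OF rho_B] Q_int QB t_pos B_nn in auto)
  then show ?case by (simp add: GSuc')
qed

lemma pos: "\<exists>m>0. \<forall>b. \<bar>b\<bar> \<le> R \<longrightarrow> ennreal m \<le> GG rho P t n b"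
proof (induction n arbitrary: R)
  case 0
  obtain m where "m > 0" "\<forall>b. \<bar>b\<bar> \<le> R \<longrightarrow> m \<le> rho b" using rho_pos[of R] by blast
  then show ?case by (intro exI[of _ m]) (auto simp: G0 intro: ennreal_leI)
next
  case (Suc n)
  have "\<exists>m>0. \<forall>a. \<bar>a\<bar> \<le> R \<longrightarrow> ennreal m \<le> (\<integral>\<^sup>+u. GG rho P t n (a + t\<^sup>2*u) \<partial>P)"
    by (rule pos_step) (use Suc.IH P_prob P_sets in auto)
  then show ?case by (simp add: GSuc)
qed

lemma lower:
  assumes Qc: "\<And>u. 1 \<le> \<bar>u\<bar> \<Longrightarrow> ennreal (c0/u\<^sup>2) \<le> Q u" and c0: "c0 > 0"
  shows "\<exists>c>0. \<forall>a. ennreal (c/(1+a\<^sup>2)) \<le> GG rho P t (Suc n) a"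
proof -
  obtain m where m: "m > 0" "\<And>b. \<bar>b\<bar> \<le> 1 \<Longrightarrow> ennreal m \<le> GG rho P t n b"
    using pos[of 1 n] by blast
  obtain m2 where m2: "m2 > 0" "\<And>b. \<bar>b\<bar> \<le> 1 + t\<^sup>2 \<Longrightarrow> ennreal m2 \<le> GG rho P t (Suc n) b"
    using pos[of "1 + t\<^sup>2" "Suc n"] by blast
  define c where "c = min (m*c0*t\<^sup>2) m2"
  have cpos: "c > 0" unfolding c_def using m m2 c0 t_pos by simp
  show ?thesis
  proof (intro exI[of _ c] conjI allI cpos)
    fix a :: real
    have a2: "1 + a\<^sup>2 \<ge> 1" by simp
    show "ennreal (c/(1+a\<^sup>2)) \<le> GG rho P t (Suc n) a"
    proof (cases "1 + t\<^sup>2 \<le> \<bar>a\<bar>")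
      case True
      have "ennreal (m*c0*t\<^sup>2/(1+a\<^sup>2)) \<le> (\<integral>\<^sup>+u. GG rho P t n (a + t\<^sup>2*u) \<partial>density lborel Q)"
        by (rule tail_step[where m=m and cz=c0]) (use m Qc c0 t_pos True in auto)
      moreover have "c/(1+a\<^sup>2) \<le> m*c0*t\<^sup>2/(1+a\<^sup>2)" unfolding c_def
        using a2 by (intro divide_right_mono) auto
      ultimately show ?thesis by (simp add: GSuc') (meson ennreal_leI order.trans)
    next
      case False
      have a2p: "1 + a\<^sup>2 > 0" by (simp add: add_pos_nonneg)
      have "c/(1+a\<^sup>2) \<le> c/1" using cpos a2 a2p by (intro divide_left_mono) auto
      then have "c/(1+a\<^sup>2) \<le> c" by simp
      also have "c \<le> m2" unfolding c_def by simp
      finally show ?thesis using m2(2)[of a] False by (meson ennreal_leI order.trans linorder_not_le less_imp_le)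
    qed
  qed
qed

end


lemma key1: "(x::real) \<noteq> 0 \<Longrightarrow> (1 + (1/x + E)\<^sup>2) * x\<^sup>2 = x\<^sup>2 + (1 + E*x)\<^sup>2"
  by (simp add: power2_eq_square field_simps)

lemma key2: "1/(1+E\<^sup>2) \<le> (x::real)\<^sup>2 + (1 + E*x)\<^sup>2"
proof -
  have p: "1 + E\<^sup>2 > 0" by (simp add: add_pos_nonneg)
  have "(1+E\<^sup>2) * (x\<^sup>2 + (1 + E*x)\<^sup>2) = 1 + ((1+E\<^sup>2)*x + E)\<^sup>2"
    by (simp add: power2_eq_square algebra_simps)
  also have "\<dots> \<ge> 1" by simp
  finally show ?thesis using p by (simp add: divide_le_eq mult.commute)
qed

lemma key3: "\<bar>x::real\<bar> \<le> 1 \<Longrightarrow> x\<^sup>2 + (1 + E*x)\<^sup>2 \<le> 1 + (1 + \<bar>E\<bar>)\<^sup>2"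
proof -
  assume x: "\<bar>x\<bar> \<le> 1"
  have "x\<^sup>2 \<le> 1" using x by (simp add: abs_le_square_iff[symmetric] abs_square_le_1)
  moreover have "\<bar>1 + E*x\<bar> \<le> 1 + \<bar>E\<bar>"
  proof -
    have "\<bar>E*x\<bar> \<le> \<bar>E\<bar>" using x by (simp add: abs_mult mult_left_le)
    then show ?thesis by (smt (verit) abs_triangle_ineq)
  qed
  then have "\<bar>1 + E*x\<bar>\<^sup>2 \<le> (1 + \<bar>E\<bar>)\<^sup>2" by (intro power_mono) auto
  ultimately show ?thesis by simp
qed


theorem lemma3p9:
  fixes rho :: "real \<Rightarrow> real" and L g t E :: real and K :: nat
    and p :: "real \<Rightarrow> real"
  assumes "prob_density rho" and "L_regular L rho"
    and "g > 0" and "K \<ge> 2" and "t = g / (real K * ln (real K))"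
    and "self_energy_density rho t K E p"
  shows "\<exists>C c. C > 0 \<and> c > 0
     \<and> (AE x in lborel. c / (1 + x\<^sup>2) \<le> p x \<and> p x \<le> C / (1 + x\<^sup>2))
     \<and> (\<forall>x. c / (1 + \<bar>x + E\<bar>\<^sup>2) \<le> rhoE rho p t E K x
            \<and> rhoE rho p t E K x \<le> C / (1 + \<bar>x + E\<bar>\<^sup>2))
     \<and> (\<forall>x. rhoE rho p t E K x \<le> (SUP y. rho y))"
proof -
  note pd = assms(1)[unfolded prob_density_def]
  have rho_m[measurable]: "rho \<in> borel_measurable borel" using pd by simp
  have rho_nn: "\<And>x. 0 \<le> rho x" using pd by simp
  have rho_int: "(\<integral>\<^sup>+x. ennreal (rho x) \<partial>lborel) = 1" using pd by simp
  note Lr = assms(2)[unfolded L_regular_def]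
  have L_pos: "L > 0" using Lr by simp
  have rho_L: "\<And>x. rho x \<le> L/(1+x\<^sup>2)" using Lr by simp
  have rho_inf: "\<And>v. v > 0 \<Longrightarrow> (INF x\<in>{x. \<bar>x\<bar> < v}. rho x) > 0" using Lr by simp
  have Kpos: "real K > 1" using assms(4) by simp
  have t_pos: "t > 0" using assms(3,5) Kpos by (simp add: ln_gt_zero)
  note se = assms(6)[unfolded self_energy_density_def]
  have pd2: "prob_density p" using se by simp
  have p_m[measurable]: "p \<in> borel_measurable borel" using pd2 unfolding prob_density_def by simp
  have p_nn: "\<And>x. 0 \<le> p x" using pd2 unfolding prob_density_def by simp
  have p_int: "(\<integral>\<^sup>+x. ennreal (p x) \<partial>lborel) = 1" using pd2 unfolding prob_density_def by simp
  define P where "P = density lborel (\<lambda>x. ennreal (p x))"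
  have P_prob: "prob_space P" unfolding P_def
    by (rule prob_spaceI) (simp add: emeasure_density p_int)
  have P_sets: "sets P = sets borel" unfolding P_def by simp
  interpret sd rho P t
    by (rule sd.intro[OF rho_m rho_nn rho_int P_prob P_sets])
  define B where "B = (SUP y. rho y)"
  have rho_le_L: "rho x \<le> L" for x
  proof -
    have "L/(1+x\<^sup>2) \<le> L/1" using L_pos by (intro divide_left_mono) (auto simp: add_pos_nonneg)
    then show ?thesis using rho_L[of x] by simp
  qed
  have bdd: "bdd_above (range rho)" by (rule bdd_aboveI2[where M=L]) (rule rho_le_L)
  have rho_B: "\<And>x. rho x \<le> B" unfolding B_def using bdd by (auto intro: cSUP_upper)
  have B_nn: "B \<ge> 0" using rho_B[of 0] rho_nn[of 0] by linarith
  have rho_pos: "\<exists>m>0. \<forall>b. \<bar>b\<bar> \<le> R \<longrightarrow> m \<le> rho b" for R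
  proof -
    define v where "v = \<bar>R\<bar> + 1"
    have v: "v > 0" unfolding v_def by simp
    define m where "m = (INF x\<in>{x. \<bar>x\<bar> < v}. rho x)"
    have m: "m > 0" unfolding m_def using rho_inf[OF v] .
    have bb: "bdd_below (rho ` {x. \<bar>x\<bar> < v})" by (rule bdd_belowI2[where m=0]) (rule rho_nn)
    show ?thesis
    proof (intro exI[of _ m] conjI allI impI m)
      fix b assume "\<bar>b\<bar> \<le> R"
      then have "b \<in> {x. \<bar>x\<bar> < v}" unfolding v_def by auto
      then show "m \<le> rho b" unfolding m_def by (rule cINF_lower[OF bb])
    qed
  qed
  define f where "f y = GG rho P t K (y + E)" for y
  have f_m[measurable]: "f \<in> borel_measurable borel" unfolding f_def by measurable
  have law: "shifted_sum_law rho p t E K = density lborel f"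
    unfolding shifted_sum_law_def f_def using shifted[of K E] unfolding P_def .
  define Q where "Q x = GG rho P t K (1/x + E) * ennreal (1/x\<^sup>2)" for x
  have Q_m[measurable]: "Q \<in> borel_measurable borel" unfolding Q_def by measurable
  have PQ: "P = density lborel Q"
  proof -
    have "density lborel (\<lambda>x. ennreal (p x)) = distr (shifted_sum_law rho p t E K) borel inverse"
      using se by simp
    also have "\<dots> = density lborel (\<lambda>x. f (1/x) * ennreal (1/x\<^sup>2))"
      unfolding law by (rule distr_inverse_density[OF f_m])
    finally show ?thesis unfolding P_def Q_def f_def .
  qed
  have QBall: "Q u \<le> ennreal (B/u\<^sup>2)" for u
  proof -
    have "Q u \<le> ennreal B * ennreal (1/u\<^sup>2)" unfolding Q_def
      by (intro mult_right_mono G_le[OF rho_B]) auto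
    also have "\<dots> = ennreal (B/u\<^sup>2)" using B_nn by (simp add: ennreal_mult[symmetric])
    finally show ?thesis .
  qed
  have QB': "\<And>u. 1 \<le> \<bar>u\<bar> \<Longrightarrow> Q u \<le> ennreal (B/u\<^sup>2)" using QBall by blast
  interpret sd2 rho P t Q B L
    by (intro sd2.intro sd.intro sd2_axioms.intro rho_m rho_nn rho_int P_prob P_sets
        Q_m PQ rho_B rho_L L_pos QB' t_pos rho_pos)
  obtain mK where mK: "mK > 0" "\<And>b. \<bar>b\<bar> \<le> 1 + \<bar>E\<bar> \<Longrightarrow> ennreal mK \<le> GG rho P t K b"
    using pos[of "1 + \<bar>E\<bar>" K] by blast
  have Qc: "ennreal (mK/u\<^sup>2) \<le> Q u" if u: "1 \<le> \<bar>u\<bar>" for u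
  proof -
    have "\<bar>1/u\<bar> \<le> 1" using u by (simp add: abs_div)
    then have "\<bar>1/u + E\<bar> \<le> 1 + \<bar>E\<bar>" using abs_triangle_ineq[of "1/u" E] by linarith
    then have "ennreal mK \<le> GG rho P t K (1/u + E)" by (rule mK(2))
    then have "ennreal mK * ennreal (1/u\<^sup>2) \<le> Q u" unfolding Q_def by (rule mult_right_mono) simp
    moreover have "ennreal mK * ennreal (1/u\<^sup>2) = ennreal (mK/u\<^sup>2)" using mK(1) by (simp add: ennreal_mult[symmetric])
    ultimately show ?thesis by simp
  qed
  obtain CK where CK: "CK > 0" "\<And>b. GG rho P t K b \<le> ennreal (CK/(1+b\<^sup>2))"
    using upper[of K] by blast
  obtain cK where cK: "cK > 0" "\<And>a. ennreal (cK/(1+a\<^sup>2)) \<le> GG rho P t (Suc (K - 1)) a"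
    using lower[OF Qc mK(1), of "K - 1"] by blast
  have SK: "Suc (K - 1) = K" using assms(4) by simp
  obtain C1 where C1: "C1 > 0" "\<And>b. GG rho P t (K - 1) b \<le> ennreal (C1/(1+b\<^sup>2))"
    using upper[of "K - 1"] by blast
  obtain c1 where c1: "c1 > 0" "\<And>a. ennreal (c1/(1+a\<^sup>2)) \<le> GG rho P t (Suc (K - 2)) a"
    using lower[OF Qc mK(1), of "K - 2"] by blast
  have SK2: "Suc (K - 2) = K - 1" using assms(4) by simp
  define Cq where "Cq = max (2*B) (2*CK*(1+E\<^sup>2))"
  define cq where "cq = min mK (cK/(1 + (1 + \<bar>E\<bar>)\<^sup>2))"
  have cq_pos: "cq > 0" unfolding cq_def using mK(1) cK(1) by (simp add: add_pos_nonneg)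
  have Cq_pos: "Cq > 0"
  proof -
    have "0 < 2*CK*(1+E\<^sup>2)" using CK(1) by (intro mult_pos_pos) (auto simp: add_pos_nonneg)
    then show ?thesis unfolding Cq_def by (simp add: less_max_iff_disj)
  qed
  have Qup: "Q x \<le> ennreal (Cq/(1+x\<^sup>2))" if x: "x \<noteq> 0" for x
  proof (cases "1 \<le> \<bar>x\<bar>")
    case True
    have "B/x\<^sup>2 \<le> Cq/(1+x\<^sup>2)"
    proof -
      have "1 \<le> \<bar>x\<bar>\<^sup>2" by (rule one_le_power[OF True])
      then have x1: "1 \<le> x\<^sup>2" by simp
      have "B/x\<^sup>2 = 2*B/(2*x\<^sup>2)" by simp
      also have "\<dots> \<le> 2*B/(1+x\<^sup>2)" using B_nn x1 by (intro divide_left_mono) (auto intro!: mult_pos_pos add_pos_nonneg)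
      also have "\<dots> \<le> Cq/(1+x\<^sup>2)" unfolding Cq_def by (intro divide_right_mono) (auto simp: add_pos_nonneg)
      finally show ?thesis .
    qed
    then show ?thesis using QBall[of x] by (meson ennreal_leI order.trans)
  next
    case False
    have "Q x \<le> ennreal (CK/(1+(1/x + E)\<^sup>2)) * ennreal (1/x\<^sup>2)" unfolding Q_def
      by (intro mult_right_mono CK(2)) auto
    also have "\<dots> = ennreal (CK/((1+(1/x + E)\<^sup>2) * x\<^sup>2))"
      using CK(1) by (simp add: ennreal_mult[symmetric] add_pos_nonneg)
    also have "\<dots> = ennreal (CK/(x\<^sup>2 + (1 + E*x)\<^sup>2))" using key1[OF x] by simp
    also have "\<dots> \<le> ennreal (Cq/(1+x\<^sup>2))"
    proof (rule ennreal_leI)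
      have pos: "0 < 1/(1+E\<^sup>2)" by (simp add: add_pos_nonneg)
      have pp: "0 < x\<^sup>2 + (1 + E*x)\<^sup>2" using key2[of E x] pos by linarith
      have "CK/(x\<^sup>2 + (1 + E*x)\<^sup>2) \<le> CK/(1/(1+E\<^sup>2))"
        using CK(1) key2[of E x] pos pp by (intro divide_left_mono) (auto intro!: divide_pos_pos)
      also have "\<dots> = CK*(1+E\<^sup>2)" by simp
      also have "\<dots> = 2*CK*(1+E\<^sup>2)/2" by simp
      also have "\<dots> \<le> 2*CK*(1+E\<^sup>2)/(1+x\<^sup>2)"
      proof (intro divide_left_mono)
        have "\<bar>x\<bar> \<le> 1" using False by simp
        then have "x\<^sup>2 \<le> 1" by (simp add: abs_square_le_1)
        then show "1 + x\<^sup>2 \<le> 2" by simp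
      qed (use CK(1) in \<open>auto simp: add_pos_nonneg\<close>)
      also have "\<dots> \<le> Cq/(1+x\<^sup>2)" unfolding Cq_def by (intro divide_right_mono) (auto simp: add_pos_nonneg)
      finally show "CK/(x\<^sup>2 + (1 + E*x)\<^sup>2) \<le> Cq/(1+x\<^sup>2)" .
    qed
    finally show ?thesis .
  qed
  have Qlow: "ennreal (cq/(1+x\<^sup>2)) \<le> Q x" if x: "x \<noteq> 0" for x
  proof -
    have a2: "1 + x\<^sup>2 \<ge> 1" by simp
    have "cq/(1+x\<^sup>2) \<le> cq/1" using cq_pos a2 by (intro divide_left_mono) (auto simp: add_pos_nonneg)
    then have cq1: "cq/(1+x\<^sup>2) \<le> cq" by simp
    show ?thesis
    proof (cases "1 \<le> \<bar>x\<bar>")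
      case True
      have "cq/(1+x\<^sup>2) \<le> mK/(1+x\<^sup>2)" unfolding cq_def by (intro divide_right_mono) (auto simp: add_pos_nonneg)
      also have "\<dots> \<le> mK/x\<^sup>2" using mK(1) x by (intro divide_left_mono) (auto simp: add_pos_nonneg)
      finally show ?thesis using Qc[OF True] by (meson ennreal_leI order.trans)
    next
      case False
      have h1: "ennreal (cK/(1+(1/x + E)\<^sup>2)) * ennreal (1/x\<^sup>2) \<le> Q x" unfolding Q_def
        using cK(2)[of "1/x + E"] unfolding SK by (rule mult_right_mono) simp
      have h2: "ennreal (cK/(1+(1/x + E)\<^sup>2)) * ennreal (1/x\<^sup>2) = ennreal (cK/(x\<^sup>2 + (1 + E*x)\<^sup>2))"
        using cK(1) key1[OF x] by (simp add: ennreal_mult[symmetric] add_pos_nonneg)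
      have h3: "cq/(1+x\<^sup>2) \<le> cK/(x\<^sup>2 + (1 + E*x)\<^sup>2)"
      proof -
        have "\<bar>x\<bar> \<le> 1" using False by simp
        from key3[OF this, of E] have k3: "x\<^sup>2 + (1 + E*x)\<^sup>2 \<le> 1 + (1 + \<bar>E\<bar>)\<^sup>2" .
        have pp: "0 < x\<^sup>2 + (1 + E*x)\<^sup>2" using x by (simp add: add_pos_nonneg)
        have "cq/(1+x\<^sup>2) \<le> cq" by (rule cq1)
        also have "\<dots> \<le> cK/(1 + (1 + \<bar>E\<bar>)\<^sup>2)" unfolding cq_def by simp
        also have "\<dots> \<le> cK/(x\<^sup>2 + (1 + E*x)\<^sup>2)" using cK(1) k3 pp by (intro divide_left_mono) auto
        finally show ?thesis .
      qed
      have "ennreal (cq/(1+x\<^sup>2)) \<le> ennreal (cK/(x\<^sup>2 + (1 + E*x)\<^sup>2))" using h3 by (rule ennreal_leI)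
      also have "\<dots> = ennreal (cK/(1+(1/x + E)\<^sup>2)) * ennreal (1/x\<^sup>2)" using h2 by simp
      also have "\<dots> \<le> Q x" by (rule h1)
      finally show ?thesis .
    qed
  qed
  have ae_eq: "AE x in lborel. ennreal (p x) = Q x"
    by (rule sigma_finite_measure.density_unique[OF sigma_finite_lborel]) (use PQ P_def in auto)
  have ae_nz: "AE x in lborel. x \<noteq> 0" by (rule AE_lborel_singleton)
  have rE: "ennreal (rhoE rho p t E K x) = GG rho P t (K - 1) (x + E)" "0 \<le> rhoE rho p t E K x" for x
    using G_integral[OF rho_B, of "K - 1" "x + E"] unfolding rhoE_def P_def by auto
  define C where "C = max Cq C1"
  define c where "c = min cq c1"
  have C_pos: "C > 0" unfolding C_def using Cq_pos by simp
  have c_pos: "c > 0" unfolding c_def using cq_pos c1(1) by simp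
  have part1: "AE x in lborel. c / (1 + x\<^sup>2) \<le> p x \<and> p x \<le> C / (1 + x\<^sup>2)"
    using ae_eq ae_nz
  proof eventually_elim
    case (elim x)
    have a2p: "1 + x\<^sup>2 > 0" by (simp add: add_pos_nonneg)
    have "ennreal (c/(1+x\<^sup>2)) \<le> ennreal (cq/(1+x\<^sup>2))" unfolding c_def using a2p
      by (intro ennreal_leI divide_right_mono) auto
    also have "\<dots> \<le> ennreal (p x)" using Qlow[OF elim(2)] elim(1) by simp
    finally have l: "c/(1+x\<^sup>2) \<le> p x" using p_nn[of x] by (simp add: ennreal_le_iff)
    have "ennreal (p x) \<le> ennreal (Cq/(1+x\<^sup>2))" using Qup[OF elim(2)] elim(1) by simp
    also have "\<dots> \<le> ennreal (C/(1+x\<^sup>2))" unfolding C_def using a2p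
      by (intro ennreal_leI divide_right_mono) auto
    finally have u: "p x \<le> C/(1+x\<^sup>2)" using C_pos a2p by (subst (asm) ennreal_le_iff) auto
    show ?case using l u by simp
  qed
  have part2: "c / (1 + \<bar>x + E\<bar>\<^sup>2) \<le> rhoE rho p t E K x" for x
  proof -
    have a2p: "1 + (x + E)\<^sup>2 > 0" by (simp add: add_pos_nonneg)
    have "ennreal (c/(1+(x+E)\<^sup>2)) \<le> ennreal (c1/(1+(x+E)\<^sup>2))" unfolding c_def using a2p
      by (intro ennreal_leI divide_right_mono) auto
    also have "\<dots> \<le> ennreal (rhoE rho p t E K x)" using c1(2)[of "x + E"] unfolding SK2 rE(1) .
    finally show "c / (1 + \<bar>x + E\<bar>\<^sup>2) \<le> rhoE rho p t E K x" using rE(2)[of x] by (simp add: ennreal_le_iff)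
  qed
  have part3: "rhoE rho p t E K x \<le> C / (1 + \<bar>x + E\<bar>\<^sup>2)" for x
  proof -
    have a2p: "1 + (x + E)\<^sup>2 > 0" by (simp add: add_pos_nonneg)
    have "ennreal (rhoE rho p t E K x) \<le> ennreal (C1/(1+(x+E)\<^sup>2))" unfolding rE(1) by (rule C1(2))
    also have "\<dots> \<le> ennreal (C/(1+(x+E)\<^sup>2))" unfolding C_def using a2p
      by (intro ennreal_leI divide_right_mono) auto
    finally have "rhoE rho p t E K x \<le> C/(1+(x+E)\<^sup>2)" using C_pos a2p by (subst (asm) ennreal_le_iff) auto
    then show "rhoE rho p t E K x \<le> C / (1 + \<bar>x + E\<bar>\<^sup>2)" by simp
  qed
  have part4: "rhoE rho p t E K x \<le> (SUP y. rho y)" for x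
  proof -
    have "ennreal (rhoE rho p t E K x) \<le> ennreal B" unfolding rE(1) by (rule G_le[OF rho_B])
    then show "rhoE rho p t E K x \<le> (SUP y. rho y)" using B_nn unfolding B_def[symmetric]
      by (subst (asm) ennreal_le_iff) auto
  qed
  show ?thesis using C_pos c_pos part1 part2 part3 part4 by blast
qed


end
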